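(* For $|q|<1$ and every integer $n\ge1$, $$\frac{1}{(n)_{q^2}!\,(n+1)_{q^2}!}=(1-q^2)^n\sum_{0\le\lambda_n\le\lambda_{n-1}\le\dots\le\lambda_1}C_{\lambda}(q)\,q^{4(\lambda_1+2\lambda_2+\dots+n\lambda_n)},$$ where the sum runs over all $n$-tuples of nonnegative integers $\lambda_1\ge\dots\ge\lambda_n\ge0$, and $C_\lambda(q)=\prod_{i}\frac{1}{(m_i)_{q^2}!}$, where $m_1,m_2,\dots$ are the multiplicities of the distinct values occurring among $\lambda_1,\dots,\lambda_n$ (zeros included).
   Context: $(a)_{q^2}=\frac{q^{2a}-1}{q^2-1}$, $(a)_{q^2}!=(1)_{q^2}(2)_{q^2}\cdots(a)_{q^2}$, $(0)_{q^2}!=1$. Equivalently $C_\lambda(q)=\prod_{i\ge0}\frac1{(\lambda'_i-\lambda'_{i+1})_{q^2}!}$ with $\lambda'_0=n$ and $\lambda'_j=\#\{k:\lambda_k\ge j\}$ for $j\ge1$. *)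

theory Defs
  imports "HOL-Analysis.Analysis"
begin

definition qint2 :: "nat \<Rightarrow> complex \<Rightarrow> complex" where
  "qint2 a q = (q ^ (2 * a) - 1) / (q\<^sup>2 - 1)"

definition qfact2 :: "nat \<Rightarrow> complex \<Rightarrow> complex" where
  "qfact2 a q = (\<Prod>k = 1..a. qint2 k q)"

definition parts :: "nat \<Rightarrow> nat list set" where
  "parts n = {xs. length xs = n \<and> sorted (rev xs)}"

definition Clam :: "nat list \<Rightarrow> complex \<Rightarrow> complex" where
  "Clam xs q = (\<Prod>v \<in> set xs. 1 / qfact2 (count_list xs v) q)"

definition wt :: "nat list \<Rightarrow> nat" where
  "wt xs = (\<Sum>i < length xs. (i + 1) * xs ! i)"

end

theory Submission
  imports Defs
begin

definition poch :: "complex \<Rightarrow> complex \<Rightarrow> nat \<Rightarrow> complex" where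
  "poch t z m = (\<Prod>i<m. 1 - z * t ^ i)"

lemma poch_0[simp]: "poch t z 0 = 1" by (simp add: poch_def)
lemma poch_Suc: "poch t z (Suc m) = poch t z m * (1 - z * t ^ m)"
  by (simp add: poch_def)

lemma poch_add: "poch t z (a + b) = poch t z a * poch t (z * t ^ a) b"
  by (induction b) (simp_all add: poch_Suc power_add mult_ac)

fun qb :: "complex \<Rightarrow> nat \<Rightarrow> nat \<Rightarrow> complex" where
  "qb t 0 k = (if k = 0 then 1 else 0)"
| "qb t (Suc n) 0 = 1"
| "qb t (Suc n) (Suc k) = qb t n (Suc k) + t ^ (n - k) * qb t n k"

lemma qb_0[simp]: "qb t n 0 = 1" by (cases n) auto

lemma qb_gt: "n < k \<Longrightarrow> qb t n k = 0"
proof (induction n arbitrary: k)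
  case 0 then show ?case by simp
next
  case (Suc n) then show ?case by (cases k) auto
qed

lemma qb_diag[simp]: "qb t n n = 1"
proof (induction n)
  case (Suc n) then show ?case by (simp add: qb_gt)
qed simp

definition SS :: "complex \<Rightarrow> nat \<Rightarrow> complex \<Rightarrow> complex" where
  "SS t n z = (\<Sum>k\<le>n. qb t n k * z ^ k * t ^ (k\<^sup>2) * poch t (z * t ^ (k + 1)) (n - k))"

lemma SS_rec: "SS t (Suc n) z = (1 - z * t ^ Suc n) * SS t n z + z * t ^ Suc n * SS t n (z * t)"
proof -
  define A where "A i = qb t n (Suc i) * z ^ Suc i * t ^ ((Suc i)\<^sup>2) * poch t (z * t ^ (Suc i + 1)) (n - i)" for i
  define B where "B i = t ^ (n - i) * qb t n i * z ^ Suc i * t ^ ((Suc i)\<^sup>2) * poch t (z * t ^ (Suc i + 1)) (n - i)" for i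
  have "SS t (Suc n) z = poch t (z * t) (Suc n) + (\<Sum>i\<le>n. A i + B i)"
    unfolding SS_def A_def B_def
    by (subst sum.atMost_Suc_shift) (simp add: algebra_simps)
  also have "\<dots> = (poch t (z * t) (Suc n) + (\<Sum>i\<le>n. A i)) + (\<Sum>i\<le>n. B i)"
    by (simp add: sum.distrib)
  also have "poch t (z * t) (Suc n) + (\<Sum>i\<le>n. A i)
      = (\<Sum>k\<le>Suc n. qb t n k * z ^ k * t ^ (k\<^sup>2) * poch t (z * t ^ (k + 1)) (Suc n - k))"
    unfolding A_def by (subst sum.atMost_Suc_shift) simp
  also have "\<dots> = (\<Sum>k\<le>n. qb t n k * z ^ k * t ^ (k\<^sup>2) * poch t (z * t ^ (k + 1)) (Suc n - k))"
    by (simp add: qb_gt)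
  also have "\<dots> = (\<Sum>k\<le>n. (1 - z * t ^ Suc n) * (qb t n k * z ^ k * t ^ (k\<^sup>2) * poch t (z * t ^ (k + 1)) (n - k)))"
  proof (rule sum.cong[OF refl])
    fix k assume "k \<in> {..n}"
    then have k: "k \<le> n" by simp
    have e1: "Suc n - k = Suc (n - k)" using k by simp
    have e2: "t ^ (k + 1) * t ^ (n - k) = t ^ Suc n"
      using k by (simp flip: power_add)
    have e2': "t ^ k * t ^ (n - k) = t ^ n"
      using k by (simp flip: power_add)
    show "qb t n k * z ^ k * t ^ (k\<^sup>2) * poch t (z * t ^ (k + 1)) (Suc n - k) =
         (1 - z * t ^ Suc n) * (qb t n k * z ^ k * t ^ (k\<^sup>2) * poch t (z * t ^ (k + 1)) (n - k))"
      unfolding e1 poch_Suc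
      by (simp add: mult.assoc e2 e2' mult_ac)
  qed
  also have "\<dots> = (1 - z * t ^ Suc n) * SS t n z"
    unfolding SS_def by (simp add: sum_distrib_left)
  also have "(\<Sum>i\<le>n. B i) = (\<Sum>i\<le>n. z * t ^ Suc n * (qb t n i * (z * t) ^ i * t ^ (i\<^sup>2) * poch t (z * t * t ^ (i + 1)) (n - i)))"
  proof (rule sum.cong[OF refl])
    fix i assume "i \<in> {..n}"
    then have i: "i \<le> n" by simp
    have e: "t ^ (n - i) * t ^ ((Suc i)\<^sup>2) = t ^ Suc n * t ^ i * t ^ (i\<^sup>2)"
    proof -
      have "(n - i) + (Suc i)\<^sup>2 = Suc n + i + i\<^sup>2" using i by (simp add: power2_eq_square)
      then show ?thesis by (metis power_add)
    qed
    have e3: "z * t ^ (Suc i + 1) = z * t * t ^ (i + 1)" by (simp add: mult_ac)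
    show "B i = z * t ^ Suc n * (qb t n i * (z * t) ^ i * t ^ (i\<^sup>2) * poch t (z * t * t ^ (i + 1)) (n - i))"
      unfolding B_def e3
    proof -
      have "t ^ (n - i) * qb t n i * z ^ Suc i * t ^ (Suc i)\<^sup>2 * poch t (z * t * t ^ (i + 1)) (n - i)
         = (t ^ (n - i) * t ^ ((Suc i)\<^sup>2)) * qb t n i * z ^ Suc i * poch t (z * t * t ^ (i + 1)) (n - i)"
        by (simp add: mult_ac)
      also have "\<dots> = z * t ^ Suc n * (qb t n i * (z * t) ^ i * t ^ (i\<^sup>2) * poch t (z * t * t ^ (i + 1)) (n - i))"
        unfolding e by (simp add: power_mult_distrib mult_ac)
      finally show "t ^ (n - i) * qb t n i * z ^ Suc i * t ^ (Suc i)\<^sup>2 * poch t (z * t * t ^ (i + 1)) (n - i) =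
    z * t ^ Suc n * (qb t n i * (z * t) ^ i * t ^ i\<^sup>2 * poch t (z * t * t ^ (i + 1)) (n - i))" .
    qed
  qed
  also have "\<dots> = z * t ^ Suc n * SS t n (z * t)"
    unfolding SS_def by (simp add: sum_distrib_left)
  finally show ?thesis .
qed

lemma SS_one: "SS t n z = 1"
proof (induction n arbitrary: z)
  case 0 then show ?case by (simp add: SS_def)
next
  case (Suc n) then show ?case by (simp add: SS_rec algebra_simps)
qed

abbreviation PP :: "complex \<Rightarrow> nat \<Rightarrow> complex" where "PP t m \<equiv> poch t t m"

lemma PP_Suc: "PP t (Suc m) = PP t m * (1 - t ^ Suc m)"
  by (simp add: poch_Suc)

lemma qb_PP: "k \<le> n \<Longrightarrow> qb t n k * PP t k * PP t (n - k) = PP t n"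
proof (induction n arbitrary: k)
  case 0 then show ?case by simp
next
  case (Suc n)
  show ?case
  proof (cases k)
    case 0 then show ?thesis by simp
  next
    case (Suc j)
    with Suc.prems have j: "j \<le> n" by simp
    show ?thesis
    proof (cases "j = n")
      case True
      then show ?thesis using Suc by (simp add: qb_gt)
    next
      case False
      with j have jn: "j < n" by simp
      have h1: "qb t n (Suc j) * PP t (Suc j) * PP t (n - Suc j) = PP t n" using Suc.IH jn by simp
      have h2: "qb t n j * PP t j * PP t (n - j) = PP t n" using Suc.IH j by simp
      have d: "n - j = Suc (n - Suc j)" using jn by simp
      have p: "PP t (n - j) = PP t (n - Suc j) * (1 - t ^ (n - j))"
        by (simp only: d PP_Suc)
      have e: "t ^ (n - j) * t ^ Suc j = t ^ Suc n" using j by (simp flip: power_add)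
      have "qb t (Suc n) k * PP t k * PP t (Suc n - k)
          = (qb t n (Suc j) + t ^ (n - j) * qb t n j) * PP t (Suc j) * PP t (n - j)"
        using Suc by simp
      also have "\<dots> = (qb t n (Suc j) * PP t (Suc j) * PP t (n - Suc j)) * (1 - t ^ (n - j))
           + t ^ (n - j) * (1 - t ^ Suc j) * (qb t n j * PP t j * PP t (n - j))"
        unfolding p PP_Suc[of t j] by (simp add: algebra_simps)
      also have "\<dots> = PP t n * (1 - t ^ (n - j) * t ^ Suc j)"
        unfolding h1 h2 by (simp add: algebra_simps)
      also have "\<dots> = PP t (Suc n)" unfolding e PP_Suc by simp
      finally show ?thesis .
    qed
  qed
qed

lemma PP_nz: "norm t < 1 \<Longrightarrow> PP t m \<noteq> 0"
proof -
  assume t: "norm t < 1"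
  have "1 - t * t ^ i \<noteq> 0" for i
  proof
    assume "1 - t * t ^ i = 0"
    then have "t ^ Suc i = 1" by (metis eq_iff_diff_eq_0 power_Suc)
    then have "norm t ^ Suc i = 1" by (metis norm_one norm_power)
    moreover have "norm t ^ Suc i < 1"
      using t power_less_one_iff[OF norm_ge_zero, of t "Suc i"] by blast
    ultimately show False by simp
  qed
  then show ?thesis by (simp add: poch_def)
qed

lemma frac_aux: "B \<noteq> 0 \<Longrightarrow> D \<noteq> 0 \<Longrightarrow> C \<noteq> 0 \<Longrightarrow>
   A / (B * C) * a1 * a2 * (E / D) = A * E * (a1 * a2 / (B * D * C))" for A B C D E a1 a2 :: complex
  by (simp add: field_simps)

lemma frac_aux2: "A \<noteq> 0 \<Longrightarrow> B \<noteq> 0 \<Longrightarrow> 1 = A * B * S \<Longrightarrow> S = 1 / (A * B)" for A B S :: complex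
  by (simp add: field_simps)

lemma key_identity:
  assumes t: "norm t < 1"
  shows "(\<Sum>k\<le>n. t ^ (k * (k + 1)) / (PP t k * PP t (Suc k) * PP t (n - k))) = 1 / (PP t n * PP t (Suc n))"
proof -
  have nz: "PP t m \<noteq> 0" for m using PP_nz[OF t] .
  have "1 = SS t n t" by (simp add: SS_one)
  also have "\<dots> = (\<Sum>k\<le>n. PP t n * PP t (Suc n) * (t ^ (k * (k + 1)) / (PP t k * PP t (Suc k) * PP t (n - k))))"
    unfolding SS_def
  proof (rule sum.cong[OF refl])
    fix k assume "k \<in> {..n}"
    then have k: "k \<le> n" by simp
    have q: "qb t n k = PP t n / (PP t k * PP t (n - k))"
      using qb_PP[OF k, of t] nz by (simp add: field_simps)
    have "PP t (Suc k + (n - k)) = PP t (Suc k) * poch t (t * t ^ Suc k) (n - k)"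
      by (rule poch_add)
    then have p: "poch t (t * t ^ (k + 1)) (n - k) = PP t (Suc n) / PP t (Suc k)"
      using k nz by (simp add: field_simps)
    have e: "t ^ (k * (k + 1)) = t ^ k * t ^ (k\<^sup>2)"
    proof -
      have "k * (k + 1) = k + k\<^sup>2" by (simp add: power2_eq_square)
      then show ?thesis by (simp only: power_add)
    qed
    show "qb t n k * t ^ k * t ^ k\<^sup>2 * poch t (t * t ^ (k + 1)) (n - k) =
         PP t n * PP t (Suc n) * (t ^ (k * (k + 1)) / (PP t k * PP t (Suc k) * PP t (n - k)))"
      unfolding q p e using nz[of k] nz[of "Suc k"] nz[of "n - k"]
      by (rule frac_aux)
  qed
  also have "\<dots> = PP t n * PP t (Suc n) * (\<Sum>k\<le>n. t ^ (k * (k + 1)) / (PP t k * PP t (Suc k) * PP t (n - k)))"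
    by (rule sum_distrib_left[symmetric])
  finally show ?thesis by (rule frac_aux2[OF nz nz])
qed

lemma qint2_eq: "t = q\<^sup>2 \<Longrightarrow> qint2 k q = (1 - t ^ k) / (1 - t)"
proof -
  assume t: "t = q\<^sup>2"
  have "q ^ (2 * k) = t ^ k" unfolding t by (simp add: power_mult)
  then show ?thesis unfolding qint2_def t
    by (metis minus_diff_eq minus_divide_divide)
qed

lemma qfact2_0[simp]: "qfact2 0 q = 1" by (simp add: qfact2_def)

lemma qfact2_Suc: "qfact2 (Suc m) q = qfact2 m q * qint2 (Suc m) q"
  by (simp add: qfact2_def)

lemma qfact2_PP: "t = q\<^sup>2 \<Longrightarrow> t \<noteq> 1 \<Longrightarrow> qfact2 m q = PP t m / (1 - t) ^ m"
proof (induction m)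
  case 0 then show ?case by simp
next
  case (Suc m)
  have nz: "1 - t \<noteq> 0" using Suc.prems by simp
  have "qfact2 (Suc m) q = PP t m / (1 - t) ^ m * ((1 - t ^ Suc m) / (1 - t))"
    using Suc by (simp add: qfact2_Suc qint2_eq)
  also have "\<dots> = PP t (Suc m) / (1 - t) ^ Suc m"
    unfolding PP_Suc using nz by (simp add: field_simps)
  finally show ?case .
qed

lemma parts_iff: "xs \<in> parts n \<longleftrightarrow> length xs = n \<and> sorted_wrt (\<lambda>x y. y \<le> x) xs"
  unfolding parts_def by (simp add: sorted_wrt_rev)

lemma wt_snoc0: "wt (xs @ [0]) = wt xs"
  unfolding wt_def by (simp add: nth_append)

lemma wt_app0: "wt (xs @ replicate m 0) = wt xs"
proof (induction m)
  case (Suc m)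
  have "xs @ replicate (Suc m) 0 = (xs @ replicate m 0) @ [0]"
    by (simp add: replicate_append_same)
  then show ?case by (simp only: wt_snoc0 Suc.IH)
qed simp

lemma wt_map_Suc: "wt (map Suc ys) = wt ys + (\<Sum>i<length ys. i + 1)"
proof -
  have "(\<Sum>i<length (map Suc ys). (i + 1) * map Suc ys ! i) = (\<Sum>i<length ys. (i + 1) * ys ! i + (i + 1))"
    by (rule sum.cong) auto
  then show ?thesis unfolding wt_def by (simp only: sum.distrib)
qed

lemma gauss2: "2 * (\<Sum>i<k. i + 1) = k * (k + (1::nat))"
  by (induction k) (simp_all add: algebra_simps)

lemma Clam_map_Suc: "Clam (map Suc ys) q = Clam ys q"
  unfolding Clam_def
  by (simp add: prod.reindex count_list_map_conv)

lemma Clam_app: "v \<notin> set xs \<Longrightarrow> Clam (xs @ replicate m v) q = Clam xs q / qfact2 m q"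
proof (cases "m = 0")
  case True then show ?thesis by simp
next
  case False
  assume v: "v \<notin> set xs"
  have cnt: "count_list (replicate m v) w = (if w = v then m else 0)" for w
    by (induction m) auto
  have "Clam (xs @ replicate m v) q = (\<Prod>w\<in>insert v (set xs). 1 / qfact2 (count_list (xs @ replicate m v) w) q)"
    unfolding Clam_def using False by simp
  also have "\<dots> = 1 / qfact2 m q * (\<Prod>w\<in>set xs. 1 / qfact2 (count_list (xs @ replicate m v) w) q)"
    using v by (simp add: cnt)
  also have "(\<Prod>w\<in>set xs. 1 / qfact2 (count_list (xs @ replicate m v) w) q) = Clam xs q"
    unfolding Clam_def using v by (intro prod.cong) (auto simp: cnt)
  finally show ?thesis by simp
qed

definition phi :: "nat \<Rightarrow> nat list \<Rightarrow> nat list" where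
  "phi n ys = map Suc ys @ replicate (n - length ys) 0"

definition psi :: "nat list \<Rightarrow> nat \<times> nat list" where
  "psi xs = (length (takeWhile ((<) 0) xs), map (\<lambda>x. x - 1) (takeWhile ((<) 0) xs))"

lemma desc_split: "sorted_wrt (\<lambda>x y. y \<le> x) xs \<Longrightarrow>
   xs = takeWhile ((<) 0) xs @ replicate (length xs - length (takeWhile ((<) 0) xs)) (0::nat)"
proof (induction xs)
  case Nil then show ?case by simp
next
  case (Cons x xs)
  show ?case
  proof (cases "0 < x")
    case True
    with Cons show ?thesis by simp
  next
    case False
    then have "x = 0" by simp
    with Cons.prems have "\<forall>y\<in>set xs. y = 0" by auto
    then have r: "xs = replicate (length xs) 0" by (simp add: replicate_length_same)
    have tw: "takeWhile ((<) 0) (x # xs) = []" using \<open>x = 0\<close> by simp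
    show ?thesis unfolding tw using \<open>x = 0\<close> r
      by (metis append_Nil diff_zero length_Cons list.size(3) replicate_Suc)
  qed
qed

lemma phi_psi: "xs \<in> parts n \<Longrightarrow> phi n (snd (psi xs)) = xs"
proof -
  assume xs: "xs \<in> parts n"
  then have s: "sorted_wrt (\<lambda>x y. y \<le> x) xs" and l: "length xs = n" by (auto simp: parts_iff)
  have m: "map Suc (map (\<lambda>x. x - 1) (takeWhile ((<) 0) xs)) = takeWhile ((<) 0) xs"
    unfolding map_map by (rule map_idI) (auto dest: set_takeWhileD)
  show ?thesis
    unfolding phi_def psi_def using desc_split[OF s] l m by simp
qed

lemma psi_in: "xs \<in> parts n \<Longrightarrow> psi xs \<in> Sigma {..n} parts"
proof -
  assume xs: "xs \<in> parts n"
  then have s: "sorted_wrt (\<lambda>x y. y \<le> x) xs" and l: "length xs = n" by (auto simp: parts_iff)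
  have "sorted_wrt (\<lambda>x y. y \<le> x) (takeWhile ((<) 0) xs)"
    using s by (metis sorted_wrt_append takeWhile_dropWhile_id)
  then have "sorted_wrt (\<lambda>x y. y - 1 \<le> x - (1::nat)) (takeWhile ((<) 0) xs)"
    by (rule sorted_wrt_mono_rel[rotated]) (simp add: diff_le_mono)
  then have "sorted_wrt (\<lambda>x y. y \<le> x) (map (\<lambda>x. x - 1) (takeWhile ((<) 0) xs))"
    by (simp add: sorted_wrt_map)
  moreover have "length (takeWhile ((<) 0) xs) \<le> n" using l length_takeWhile_le by metis
  ultimately show ?thesis unfolding psi_def by (simp add: parts_iff)
qed

lemma psi_phi: "p \<in> Sigma {..n} parts \<Longrightarrow> psi (phi n (snd p)) = p"
proof -
  assume p: "p \<in> Sigma {..n} parts"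
  obtain k ys where pk: "p = (k, ys)" by (cases p)
  with p have k: "k \<le> n" and ys: "length ys = k" by (auto simp: parts_iff)
  have tw: "takeWhile ((<) 0) (map Suc ys @ replicate (n - k) 0) = map Suc ys"
  proof -
    have "takeWhile ((<) 0) (map Suc ys @ replicate (n - k) 0) = map Suc ys @ takeWhile ((<) 0) (replicate (n - k) 0)"
      by (rule takeWhile_append2) auto
    moreover have "takeWhile ((<) 0) (replicate (n - k) (0::nat)) = []" by (cases "n - k") auto
    ultimately show ?thesis by simp
  qed
  show ?thesis unfolding pk phi_def psi_def using ys tw by (simp add: comp_def)
qed

lemma phi_in: "p \<in> Sigma {..n} parts \<Longrightarrow> phi n (snd p) \<in> parts n"
proof -
  assume p: "p \<in> Sigma {..n} parts"
  obtain k ys where pk: "p = (k, ys)" by (cases p)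
  with p have k: "k \<le> n" and ys: "length ys = k" and s: "sorted_wrt (\<lambda>x y. y \<le> x) ys"
    by (auto simp: parts_iff)
  have "sorted_wrt (\<lambda>x y. y \<le> x) (map Suc ys)" using s by (simp add: sorted_wrt_map)
  moreover have "sorted_wrt (\<lambda>x y. y \<le> (x::nat)) (replicate m 0)" for m
    by (induction m) auto
  ultimately show ?thesis unfolding pk phi_def using ys k
    by (auto simp: parts_iff sorted_wrt_append)
qed

lemma geom_summable_on: "0 \<le> r \<Longrightarrow> r < 1 \<Longrightarrow> (\<lambda>x::nat. r ^ x) summable_on UNIV"
  for r :: real
  by (rule norm_summable_imp_summable_on) (simp add: summable_geometric)

lemma lists_summable:
  fixes r :: real
  assumes r0: "0 \<le> r" and r1: "r < 1"
  shows "(\<lambda>xs. r ^ sum_list xs) summable_on {xs::nat list. length xs = n}"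
proof (induction n)
  case 0
  have "{xs::nat list. length xs = 0} = {[]}" by auto
  then show ?case by simp
next
  case (Suc n)
  define L where "L = {xs::nat list. length xs = n}"
  have img: "{xs::nat list. length xs = Suc n} = (\<lambda>(x,ys). x # ys) ` (UNIV \<times> L)"
    unfolding L_def by (auto simp: length_Suc_conv image_iff)
  have inj: "inj_on (\<lambda>(x::nat,ys). x # ys) (UNIV \<times> L)"
    by (auto simp: inj_on_def)
  have IH: "(\<lambda>xs. r ^ sum_list xs) summable_on L" using Suc L_def by simp
  define f where "f = (\<lambda>p::nat \<times> nat list. r ^ fst p * r ^ sum_list (snd p))"
  have "(\<lambda>p. norm (f p)) summable_on Sigma UNIV (\<lambda>_. L)"
  proof (subst Infinite_Sum.abs_summable_on_Sigma_iff, intro conjI ballI)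
    fix x :: nat
    have "(\<lambda>y. r ^ x * r ^ sum_list y) summable_on L"
      by (rule summable_on_cmult_right[OF IH])
    then show "(\<lambda>y. norm (f (x, y))) summable_on L"
      unfolding f_def using r0 by (simp add: abs_mult)
  next
    have "(\<lambda>x. r ^ x * infsum (\<lambda>y. r ^ sum_list y) L) summable_on UNIV"
      by (rule summable_on_cmult_left[OF geom_summable_on[OF r0 r1]])
    moreover have "(\<Sum>\<^sub>\<infinity>y\<in>L. norm (f (x, y))) = r ^ x * infsum (\<lambda>y. r ^ sum_list y) L" for x
      unfolding f_def using r0 by (simp add: abs_mult infsum_cmult_right')
    moreover have "0 \<le> r ^ x * infsum (\<lambda>y. r ^ sum_list y) L" for x
      using r0 by (simp add: infsum_nonneg)
    ultimately show "(\<lambda>x. norm (\<Sum>\<^sub>\<infinity>y\<in>L. norm (f (x, y)))) summable_on UNIV"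
      by simp
  qed
  then have "f summable_on UNIV \<times> L" by (rule abs_summable_summable)
  then have "((\<lambda>xs. r ^ sum_list xs) \<circ> (\<lambda>(x,ys). x # ys)) summable_on (UNIV \<times> L)"
    by (rule summable_on_cong[THEN iffD1, rotated]) (auto simp: f_def power_add)
  then show ?case unfolding img by (subst summable_on_reindex[OF inj])
qed

lemma norm_inv_qint2:
  assumes q: "norm q < 1" and k: "1 \<le> k"
  shows "norm (1 / qint2 k q) \<le> 2 / (1 - norm q ^ 2)"
proof -
  define t where "t = q\<^sup>2"
  have nt: "norm t = norm q ^ 2" unfolding t_def by (simp add: norm_power)
  have nt1: "norm t < 1" unfolding nt using q by (simp add: power_less_one_iff)
  have "1 / qint2 k q = (1 - t) / (1 - t ^ k)" using qint2_eq[OF t_def] by simp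
  then have eq: "norm (1 / qint2 k q) = norm (1 - t) / norm (1 - t ^ k)" by (simp add: norm_divide)
  have a: "norm (1 - t) \<le> 2"
    using norm_triangle_ineq4[of 1 t] nt1 by simp
  have "norm t ^ k \<le> norm t ^ 1"
    by (rule power_decreasing) (use k nt1 in auto)
  then have "1 - norm t \<le> 1 - norm (t ^ k)" by (simp add: norm_power)
  also have "\<dots> \<le> norm (1 - t ^ k)" using norm_triangle_ineq2[of 1 "t ^ k"] by simp
  finally have b: "1 - norm t \<le> norm (1 - t ^ k)" .
  have "norm (1 - t) / norm (1 - t ^ k) \<le> 2 / (1 - norm t)"
    by (rule frac_le) (use a b nt1 in auto)
  then show ?thesis unfolding eq nt .
qed

lemma K_nonneg: "norm q < 1 \<Longrightarrow> 0 \<le> 2 / (1 - norm q ^ 2)"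
proof -
  assume q: "norm q < 1"
  have "norm q ^ 2 < 1" using q power_less_one_iff[OF norm_ge_zero, of q 2] by simp
  then show ?thesis by simp
qed

lemma norm_inv_qfact2:
  assumes q: "norm q < 1"
  shows "norm (1 / qfact2 m q) \<le> (2 / (1 - norm q ^ 2)) ^ m"
proof (induction m)
  case 0 then show ?case by simp
next
  case (Suc m)
  have "norm (1 / qfact2 (Suc m) q) = norm (1 / qfact2 m q) * norm (1 / qint2 (Suc m) q)"
    by (simp add: qfact2_Suc norm_divide norm_mult)
  also have "\<dots> \<le> (2 / (1 - norm q ^ 2)) ^ m * (2 / (1 - norm q ^ 2))"
    by (rule mult_mono[OF Suc.IH norm_inv_qint2[OF q]]) (auto intro: zero_le_power K_nonneg[OF q])
  finally show ?case by (simp add: mult.commute)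
qed

lemma Clam_bound:
  assumes q: "norm q < 1"
  shows "norm (Clam xs q) \<le> ((2 / (1 - norm q ^ 2)) ^ length xs) ^ length xs"
proof -
  define K where "K = 2 / (1 - norm q ^ 2)"
  have nq: "norm q ^ 2 < 1" using q by (simp add: power_less_one_iff)
  have K1: "1 \<le> K" unfolding K_def using nq by (simp add: field_simps)
  have each: "norm (1 / qfact2 (count_list xs v) q) \<le> K ^ length xs" for v
  proof -
    have "norm (1 / qfact2 (count_list xs v) q) \<le> K ^ count_list xs v"
      unfolding K_def by (rule norm_inv_qfact2[OF q])
    also have "\<dots> \<le> K ^ length xs" by (rule power_increasing[OF count_le_length K1])
    finally show ?thesis .
  qed
  have "norm (Clam xs q) = (\<Prod>v\<in>set xs. norm (1 / qfact2 (count_list xs v) q))"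
    unfolding Clam_def by (simp add: prod_norm)
  also have "\<dots> \<le> (\<Prod>v\<in>set xs. K ^ length xs)"
    by (rule prod_mono) (use each in auto)
  also have "\<dots> = (K ^ length xs) ^ card (set xs)" by simp
  also have "\<dots> \<le> (K ^ length xs) ^ length xs"
    by (rule power_increasing[OF card_length]) (use K1 in simp)
  finally show ?thesis unfolding K_def .
qed

lemma sum_list_le_wt: "sum_list xs \<le> wt xs"
proof -
  have "sum_list xs = (\<Sum>i<length xs. xs ! i)"
    by (simp add: sum_list_sum_nth atLeast0LessThan)
  also have "\<dots> \<le> wt xs" unfolding wt_def by (rule sum_mono) simp
  finally show ?thesis .
qed

lemma f_summable:
  assumes q: "norm q < 1"
  shows "(\<lambda>xs. Clam xs q * q ^ (4 * wt xs)) summable_on parts n"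
proof -
  define r where "r = norm q ^ 4"
  define M where "M = ((2 / (1 - norm q ^ 2)) ^ n) ^ n"
  have r0: "0 \<le> r" and r1: "r < 1" unfolding r_def using q by (auto simp: power_less_one_iff)
  have M0: "0 \<le> M" unfolding M_def using K_nonneg[OF q] by simp
  have sub: "parts n \<subseteq> {xs. length xs = n}" by (auto simp: parts_def)
  have g: "(\<lambda>xs. M * r ^ sum_list xs) summable_on parts n"
    by (rule summable_on_cmult_right[OF summable_on_subset_banach[OF lists_summable[OF r0 r1] sub]])
  have gn: "(\<lambda>xs. norm (M * r ^ sum_list xs)) summable_on parts n"
    using g by (rule summable_on_cong[THEN iffD1, rotated]) (use r0 M0 in simp)
  have "(\<lambda>xs. norm (Clam xs q * q ^ (4 * wt xs))) summable_on parts n"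
  proof (rule Infinite_Sum.abs_summable_on_comparison_test[OF gn])
    fix xs assume xs: "xs \<in> parts n"
    then have l: "length xs = n" by (simp add: parts_def)
    have c: "norm (Clam xs q) \<le> M" using Clam_bound[OF q, of xs] l by (simp add: M_def)
    have "norm q ^ (4 * wt xs) \<le> norm q ^ (4 * sum_list xs)"
      by (rule power_decreasing) (use sum_list_le_wt[of xs] q in auto)
    also have "\<dots> = r ^ sum_list xs" by (simp add: r_def power_mult)
    finally have p: "norm (q ^ (4 * wt xs)) \<le> r ^ sum_list xs" by (simp add: norm_power)
    have "norm (Clam xs q * q ^ (4 * wt xs)) \<le> M * r ^ sum_list xs"
      unfolding norm_mult by (rule mult_mono[OF c p]) (use M0 in auto)
    then show "norm (Clam xs q * q ^ (4 * wt xs)) \<le> norm (M * r ^ sum_list xs)"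
      using r0 M0 by simp
  qed
  then show ?thesis by (rule abs_summable_summable)
qed

lemma f_phi:
  assumes l: "length ys = k"
  shows "Clam (phi n ys) q * q ^ (4 * wt (phi n ys))
       = (q\<^sup>2) ^ (k * (k + 1)) / qfact2 (n - k) q * (Clam ys q * q ^ (4 * wt ys))"
proof -
  have c: "Clam (phi n ys) q = Clam ys q / qfact2 (n - k) q"
    unfolding phi_def l by (subst Clam_app) (auto simp: Clam_map_Suc)
  have w: "4 * wt (phi n ys) = 4 * wt ys + 2 * (k * (k + 1))"
    unfolding phi_def l wt_app0 wt_map_Suc using gauss2[of k] l by simp
  have p: "q ^ (4 * wt (phi n ys)) = q ^ (4 * wt ys) * (q\<^sup>2) ^ (k * (k + 1))"
    unfolding w by (simp add: power_add power_mult)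
  show ?thesis unfolding c p by simp
qed

definition ff :: "complex \<Rightarrow> nat list \<Rightarrow> complex" where
  "ff q xs = Clam xs q * q ^ (4 * wt xs)"

lemma rec_infsum:
  assumes q: "norm q < 1"
  shows "infsum (ff q) (parts n) = (\<Sum>k\<le>n. (q\<^sup>2) ^ (k * (k + 1)) / qfact2 (n - k) q * infsum (ff q) (parts k))"
proof -
  define g where "g p = ff q (phi n (snd p))" for p :: "nat \<times> nat list"
  have S: "ff q summable_on parts n" using f_summable[OF q] unfolding ff_def .
  have gS: "g summable_on Sigma {..n} parts"
    using S summable_on_reindex_bij_witness[of "parts n" "\<lambda>p. phi n (snd p)" psi "Sigma {..n} parts" g "ff q"]
    using phi_psi psi_in psi_phi phi_in unfolding g_def by auto
  have "infsum (ff q) (parts n) = infsum g (Sigma {..n} parts)"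
    using infsum_reindex_bij_witness[of "parts n" "\<lambda>p. phi n (snd p)" psi "Sigma {..n} parts" g "ff q"]
    using phi_psi psi_in psi_phi phi_in unfolding g_def by auto
  also have "\<dots> = infsum (\<lambda>k. infsum (\<lambda>ys. g (k, ys)) (parts k)) {..n}"
    by (rule infsum_Sigma_banach[OF gS, symmetric])
  also have "\<dots> = (\<Sum>k\<le>n. infsum (\<lambda>ys. g (k, ys)) (parts k))" by simp
  also have "\<dots> = (\<Sum>k\<le>n. (q\<^sup>2) ^ (k * (k + 1)) / qfact2 (n - k) q * infsum (ff q) (parts k))"
  proof (rule sum.cong[OF refl])
    fix k assume "k \<in> {..n}"
    have "infsum (\<lambda>ys. g (k, ys)) (parts k) = infsum (\<lambda>ys. (q\<^sup>2) ^ (k * (k + 1)) / qfact2 (n - k) q * ff q ys) (parts k)"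
      by (rule infsum_cong) (auto simp: g_def ff_def parts_def f_phi)
    also have "\<dots> = (q\<^sup>2) ^ (k * (k + 1)) / qfact2 (n - k) q * infsum (ff q) (parts k)"
      by (rule infsum_cmult_right')
    finally show "infsum (\<lambda>ys. g (k, ys)) (parts k) = (q\<^sup>2) ^ (k * (k + 1)) / qfact2 (n - k) q * infsum (ff q) (parts k)" .
  qed
  finally show ?thesis .
qed

definition Gt :: "complex \<Rightarrow> nat \<Rightarrow> complex" where
  "Gt t n = (1 - t) ^ Suc n / (PP t n * PP t (Suc n))"

lemma frac_aux3: "P \<noteq> 0 \<Longrightarrow> u \<noteq> 0 \<Longrightarrow> c / (P / u) * (v / Q) = u * v * (c / (Q * P))" for P u c v Q :: complex
  by (simp add: field_simps)

lemma Gt_identity: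
  assumes q: "norm q < 1" and t: "t = q\<^sup>2"
  shows "Gt t n = (\<Sum>k\<le>n. t ^ (k * (k + 1)) / qfact2 (n - k) q * Gt t k)"
proof -
  have nt: "norm t < 1" unfolding t using q by (simp add: norm_power power_less_one_iff)
  then have t1: "t \<noteq> 1" by auto
  have nz: "PP t m \<noteq> 0" for m by (rule PP_nz[OF nt])
  have u: "(1 - t) ^ m \<noteq> 0" for m using t1 by simp
  have "(\<Sum>k\<le>n. t ^ (k * (k + 1)) / qfact2 (n - k) q * Gt t k)
     = (\<Sum>k\<le>n. (1 - t) ^ Suc n * (t ^ (k * (k + 1)) / (PP t k * PP t (Suc k) * PP t (n - k))))"
  proof (rule sum.cong[OF refl])
    fix k assume "k \<in> {..n}"
    then have k: "k \<le> n" by simp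
    have e: "(1 - t) ^ (n - k) * (1 - t) ^ Suc k = (1 - t) ^ Suc n"
      using k by (simp flip: power_add)
    have "t ^ (k * (k + 1)) / qfact2 (n - k) q * Gt t k
        = t ^ (k * (k + 1)) / (PP t (n - k) / (1 - t) ^ (n - k)) * ((1 - t) ^ Suc k / (PP t k * PP t (Suc k)))"
      unfolding Gt_def qfact2_PP[OF t t1] ..
    also have "\<dots> = (1 - t) ^ (n - k) * (1 - t) ^ Suc k * (t ^ (k * (k + 1)) / (PP t k * PP t (Suc k) * PP t (n - k)))"
      by (rule frac_aux3[OF nz u])
    finally show "t ^ (k * (k + 1)) / qfact2 (n - k) q * Gt t k = (1 - t) ^ Suc n * (t ^ (k * (k + 1)) / (PP t k * PP t (Suc k) * PP t (n - k)))"
      unfolding e .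
  qed
  also have "\<dots> = (1 - t) ^ Suc n * (\<Sum>k\<le>n. t ^ (k * (k + 1)) / (PP t k * PP t (Suc k) * PP t (n - k)))"
    by (rule sum_distrib_left[symmetric])
  also have "\<dots> = Gt t n" unfolding key_identity[OF nt] Gt_def by simp
  finally show ?thesis by simp
qed

lemma value_infsum:
  assumes q: "norm q < 1"
  shows "infsum (ff q) (parts n) = Gt (q\<^sup>2) n"
proof (induction n rule: less_induct)
  case (less n)
  define t where "t = q\<^sup>2"
  have nt: "norm t < 1" unfolding t_def using q by (simp add: norm_power power_less_one_iff)
  then have t1: "t \<noteq> 1" by auto
  show ?case
  proof (cases n)
    case 0
    have p0: "parts 0 = {[]}" by (auto simp: parts_def)
    have "Gt t 0 = 1" unfolding Gt_def using t1 by (simp add: PP_Suc)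
    then show ?thesis unfolding 0 p0 t_def[symmetric] by (simp add: ff_def Clam_def wt_def)
  next
    case (Suc m)
    define c where "c k = t ^ (k * (k + 1)) / qfact2 (n - k) q" for k
    define X where "X = infsum (ff q) (parts n)"
    define R where "R = (\<Sum>k\<le>m. c k * Gt t k)"
    have cn: "c n = t ^ (n * (n + 1))" unfolding c_def by simp
    have "X = (\<Sum>k\<le>n. c k * infsum (ff q) (parts k))"
      unfolding X_def c_def t_def by (rule rec_infsum[OF q])
    also have "\<dots> = (\<Sum>k\<le>m. c k * infsum (ff q) (parts k)) + c n * X"
      unfolding Suc X_def by simp
    also have "(\<Sum>k\<le>m. c k * infsum (ff q) (parts k)) = R"
      unfolding R_def t_def using less.IH Suc by (intro sum.cong) auto
    finally have hX: "X = R + c n * X" .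
    have "Gt t n = (\<Sum>k\<le>n. c k * Gt t k)"
      unfolding c_def by (rule Gt_identity[OF q t_def])
    also have "\<dots> = R + c n * Gt t n" unfolding R_def Suc by simp
    finally have hG: "Gt t n = R + c n * Gt t n" .
    have "c n \<noteq> 1"
    proof
      assume "c n = 1"
      then have "norm t ^ (n * (n + 1)) = 1" unfolding cn by (metis norm_one norm_power)
      moreover have "norm t ^ (n * (n + 1)) < 1"
        using nt power_less_one_iff[OF norm_ge_zero, of t "n * (n + 1)"] Suc by simp
      ultimately show False by simp
    qed
    then have "(1 - c n) * (X - Gt t n) = 0 \<Longrightarrow> X = Gt t n" by simp
    moreover have "(1 - c n) * (X - Gt t n) = (X - (R + c n * X)) - (Gt t n - (R + c n * Gt t n))"
      by (simp add: algebra_simps)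
    moreover have "(X - (R + c n * X)) - (Gt t n - (R + c n * Gt t n)) = 0"
      using hX[symmetric] hG[symmetric] by simp
    ultimately show ?thesis unfolding X_def t_def by argo
  qed
qed

lemma frac_aux4: "A \<noteq> 0 \<Longrightarrow> B \<noteq> 0 \<Longrightarrow> u \<noteq> 0 \<Longrightarrow> w \<noteq> 0 \<Longrightarrow>
  1 / ((A / u) * (B / w)) = u * (w / (A * B))" for A B u w :: complex
  by (simp add: field_simps)

theorem mainTheorem12:
  fixes q :: complex and n :: nat
  assumes "norm q < 1" and "n \<ge> 1"
  shows "(\<lambda>xs. Clam xs q * q ^ (4 * wt xs)) summable_on parts n \<and>
         1 / (qfact2 n q * qfact2 (n + 1) q)
           = (1 - q\<^sup>2) ^ n * (\<Sum>\<^sub>\<infinity> xs \<in> parts n. Clam xs q * q ^ (4 * wt xs))"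
proof
  show "(\<lambda>xs. Clam xs q * q ^ (4 * wt xs)) summable_on parts n"
    by (rule f_summable[OF assms(1)])
next
  define t where "t = q\<^sup>2"
  have nt: "norm t < 1" unfolding t_def using assms(1) by (simp add: norm_power power_less_one_iff)
  then have t1: "t \<noteq> 1" by auto
  have nz: "PP t m \<noteq> 0" for m by (rule PP_nz[OF nt])
  have u: "(1 - t) ^ m \<noteq> 0" for m using t1 by simp
  have v: "(\<Sum>\<^sub>\<infinity> xs \<in> parts n. Clam xs q * q ^ (4 * wt xs)) = Gt t n"
    using value_infsum[OF assms(1), of n] unfolding ff_def t_def .
  have "1 / (qfact2 n q * qfact2 (n + 1) q) = 1 / ((PP t n / (1 - t) ^ n) * (PP t (Suc n) / (1 - t) ^ Suc n))"
    using qfact2_PP[OF t_def t1, of n] qfact2_PP[OF t_def t1, of "Suc n"] by simp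
  also have "\<dots> = (1 - t) ^ n * ((1 - t) ^ Suc n / (PP t n * PP t (Suc n)))"
    by (rule frac_aux4[OF nz nz u u])
  also have "\<dots> = (1 - q\<^sup>2) ^ n * (\<Sum>\<^sub>\<infinity> xs \<in> parts n. Clam xs q * q ^ (4 * wt xs))"
    unfolding v Gt_def t_def ..
  finally show "1 / (qfact2 n q * qfact2 (n + 1) q)
           = (1 - q\<^sup>2) ^ n * (\<Sum>\<^sub>\<infinity> xs \<in> parts n. Clam xs q * q ^ (4 * wt xs))" .
qed

end
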